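(* Let $m>0$ be an even integer and suppose that $s=(s_A,s_B)$ is a classical deterministic winning strategy for the matching game with parameter $m$. Then there is a set $R$ of bit strings of length $m$ such that the following hold simultaneously: (1) $|R|\ge \dfrac{2^m}{2^{\lceil\log_2 m\rceil}}$; (2) the graph $G_s$ contains a connected component with more than $\frac{m}{2}$ vertices; (3) for each $\{i,j\}\in E_s$, the value $r_i\oplus r_j$ is the same for every $r\in R$.
   Context: A perfect matching on $\{0,\ldots,m-1\}$ ($m$ even) is a partition of this set into $m/2$ sets of cardinality 2; $M_m$ denotes the set of all perfect matchings. Let $L=\lceil\log_2 m\rceil$. For $n\in\{0,\ldots,m-1\}$, $\bar n\in\{0,1\}^L$ is the $L$-bit binary representation of $n$, most significant bit first. On bit strings $\oplus$ is bitwise, and $u\cdot v=\bigoplus_i(u_i\wedge v_i)$. The matching game with parameter $m$: Alice receives $x\in\{0,1\}^m$ and outputs $a\in\{0,1\}^L$; Bob receives $y\in M_m$ and outputs a two-element set $\{b_1,b_2\}\subseteq\{0,\ldots,m-1\}$ and a string $b\in\{0,1\}^L$; they win on question $(x,y)$ iff $\{b_1,b_2\}\in y$ and $x_{b_1}\oplus x_{b_2}=(\bar b_1\oplus\bar b_2)\cdot(a\oplus b)$. A classical deterministic strategy is a pair of functions $s_A:\{0,1\}^m\to\{0,1\}^L$ and $s_B:M_m\to\{\text{two-element subsets of }\{0,\ldots,m-1\}\}\times\{0,1\}^L$; it is winning if $(s_A(x),s_B(y))$ wins on every question $(x,y)\in\{0,1\}^m\times M_m$. For such $s$, $G_s=(V,E_s)$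 is the graph with vertex set $V=\{0,1,\ldots,m-1\}$ whose edge set $E_s$ consists of all two-element sets $\{i,j\}$ that Bob outputs (as the first component of $s_B(y)$) for at least one input $y\in M_m$. A connected component of a graph is a nonempty maximal connected induced subgraph; its cardinality is its number of vertices. *)

theory Defs
  imports Main "HOL-Library.Log_Nat" Complex_Main
begin

definition Lm :: "nat \<Rightarrow> nat" where
  "Lm m = nat \<lceil>log 2 (real m)\<rceil>"

definition bin :: "nat \<Rightarrow> nat \<Rightarrow> bool list" where
  "bin L n = map (\<lambda>k. bit n (L - 1 - k)) [0..<L]"

definition xorv :: "bool list \<Rightarrow> bool list \<Rightarrow> bool list" where
  "xorv u v = map2 (\<noteq>) u v"

definition dotv :: "bool list \<Rightarrow> bool list \<Rightarrow> bool" where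
  "dotv u v = foldr (\<noteq>) (map2 (\<and>) u v) False"

definition perfect_matchings :: "nat \<Rightarrow> nat set set set" where
  "perfect_matchings m = {y. (\<forall>e\<in>y. e \<subseteq> {0..<m} \<and> card e = 2) \<and>
                              (\<forall>i<m. \<exists>!e. e \<in> y \<and> i \<in> e)}"

definition wins :: "nat \<Rightarrow> bool list \<Rightarrow> bool list \<Rightarrow> nat set set \<Rightarrow> nat set \<Rightarrow> bool list \<Rightarrow> bool" where
  "wins m x a y e b \<longleftrightarrow> e \<in> y \<and>
     (\<exists>b1 b2. e = {b1, b2} \<and> b1 \<noteq> b2 \<and>
        ((x ! b1 \<noteq> x ! b2) = dotv (xorv (bin (Lm m) b1) (bin (Lm m) b2)) (xorv a b)))"

definition winning_strategy :: "nat \<Rightarrow> (bool list \<Rightarrow> bool list) \<Rightarrow> (nat set set \<Rightarrow> nat set \<times> bool list) \<Rightarrow> bool" where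
  "winning_strategy m sA sB \<longleftrightarrow>
     (\<forall>x. length x = m \<longrightarrow> length (sA x) = Lm m) \<and>
     (\<forall>y\<in>perfect_matchings m. card (fst (sB y)) = 2 \<and> fst (sB y) \<subseteq> {0..<m}
                                \<and> length (snd (sB y)) = Lm m) \<and>
     (\<forall>x y. length x = m \<longrightarrow> y \<in> perfect_matchings m \<longrightarrow>
        wins m x (sA x) y (fst (sB y)) (snd (sB y)))"

definition edges_s :: "nat \<Rightarrow> (nat set set \<Rightarrow> nat set \<times> bool list) \<Rightarrow> nat set set" where
  "edges_s m sB = (\<lambda>y. fst (sB y)) ` perfect_matchings m"

definition component :: "nat \<Rightarrow> nat set set \<Rightarrow> nat \<Rightarrow> nat set" where
  "component m E v = {u. u < m \<and> (v, u) \<in> {(i, j). {i, j} \<in> E}\<^sup>*}"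

end

theory Submission
  imports Defs
begin

lemma xorv_comm: "xorv u v = xorv v u"
  unfolding xorv_def
proof (induction u arbitrary: v)
  case Nil then show ?case by simp
next
  case (Cons a u) then show ?case by (cases v) auto
qed

lemma pigeon:
  fixes sA :: "bool list \<Rightarrow> bool list"
  assumes "\<forall>x. length x = m \<longrightarrow> length (sA x) = L"
  shows "\<exists>a. real (card {x. length x = m \<and> sA x = a}) \<ge> 2^m/2^L"
proof (rule ccontr)
  assume H: "\<not> ?thesis"
  define X where "X = {x::bool list. length x = m}"
  define A where "A = {a::bool list. length a = L}"
  have cX: "card X = 2^m" using card_lists_length_eq[of "UNIV::bool set" m] by (simp add: X_def)
  have cA: "card A = 2^L" using card_lists_length_eq[of "UNIV::bool set" L] by (simp add: A_def)
  have fA: "finite A" using finite_lists_length_eq[of "UNIV::bool set" L] by (simp add: A_def)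
  have neA: "A \<noteq> {}" unfolding A_def using length_replicate[of L False] by blast
  have XU: "X = (\<Union>a\<in>A. {x. length x = m \<and> sA x = a})" using assms by (auto simp: X_def A_def)
  have "real (card X) \<le> real (\<Sum>a\<in>A. card {x. length x = m \<and> sA x = a})"
    unfolding XU using card_UN_le[OF fA] by (simp only: of_nat_le_iff)
  also have "\<dots> = (\<Sum>a\<in>A. real (card {x. length x = m \<and> sA x = a}))" by simp
  also have "\<dots> < (\<Sum>a\<in>A. 2^m/2^L)"
    using H fA neA by (intro sum_strict_mono) (auto simp: not_le)
  also have "\<dots> = 2^m" using cA by simp
  finally show False using cX by simp
qed

lemma sym_comp_rel: "sym {(i, j). {i, j} \<in> E}"
  by (auto simp: sym_def insert_commute)

lemma comp_self: "v < m \<Longrightarrow> v \<in> component m E v"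
  by (simp add: component_def)

lemma comp_eq: assumes "w \<in> component m E v" shows "component m E w = component m E v"
proof -
  have "(v, w) \<in> {(i, j). {i, j} \<in> E}\<^sup>*" using assms by (simp add: component_def)
  moreover then have "(w, v) \<in> {(i, j). {i, j} \<in> E}\<^sup>*"
    using sym_rtrancl[OF sym_comp_rel[of E]] by (meson symD)
  ultimately show ?thesis unfolding component_def
    by (auto intro: rtrancl_trans)
qed

lemma comp_fin: "finite (component m E v)" "component m E v \<subseteq> {0..<m}"
  by (auto simp: component_def intro: finite_subset[of _ "{0..<m}"])

lemma comp_min:
  assumes "v < m" "w < m" "Min (component m E v) = Min (component m E w)"
  shows "w \<in> component m E v"
proof -
  have "Min (component m E v) \<in> component m E v"
    proof (rule Min_in[OF comp_fin(1)]) show "component m E v \<noteq> {}" using comp_self[OF assms(1), of E] by blast qed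
  moreover have "Min (component m E w) \<in> component m E w"
    proof (rule Min_in[OF comp_fin(1)]) show "component m E w \<noteq> {}" using comp_self[OF assms(2), of E] by blast qed
  ultimately have "component m E v = component m E w" using assms(3) comp_eq by metis
  then show ?thesis using comp_self[OF assms(2)] by simp
qed

lemma big_component:
  fixes sB :: "nat set set \<Rightarrow> nat set \<times> bool list"
  assumes "m > 0" "even m" "\<forall>y\<in>perfect_matchings m. fst (sB y) \<in> y"
  shows "\<exists>v<m. real (card (component m (edges_s m sB) v)) > real m / 2"
proof -
  define E where "E = edges_s m sB"
  define h where "h = m div 2"
  have m2: "m = 2*h" "h > 0" using assms(1,2) by (auto simp: h_def)
  define c where "c v = Min (component m E v)" for v
  define key where "key v = c v * m + v" for v
  define xs where "xs = sort_key key [0..<m]"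
  have len: "length xs = m" by (simp add: xs_def)
  have dist: "distinct xs" by (simp add: xs_def)
  have setxs: "set xs = {0..<m}" by (simp add: xs_def)
  have srt: "sorted (map key xs)" by (simp add: xs_def)
  have cm: "c v < m" if "v < m" for v
  proof -
    have "c v \<in> component m E v" unfolding c_def
      proof (rule Min_in[OF comp_fin(1)]) show "component m E v \<noteq> {}" using comp_self[OF that, of E] by blast qed
    then show ?thesis using comp_fin(2)[of m E v] by auto
  qed
  have ckey: "c v = key v div m" if "v < m" for v
    using that by (simp add: key_def)
  have xlt: "xs ! i < m" if "i < m" for i
    using setxs len that nth_mem by fastforce
  have cmono: "c (xs ! a) \<le> c (xs ! b)" if "a \<le> b" "b < m" for a b
  proof -
    have "key (xs ! a) \<le> key (xs ! b)"
      using sorted_nth_mono[OF srt, of a b] that len by simp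
    then show ?thesis using ckey xlt that by (simp add: div_le_mono)
  qed
  define y where "y = (\<lambda>k. {xs ! k, xs ! (k + h)}) ` {..<h}"
  have ne: "xs ! k \<noteq> xs ! (k + h)" if "k < h" for k
    using nth_eq_iff_index_eq[OF dist, of k "k+h"] len m2 that by auto
  have yPM: "y \<in> perfect_matchings m"
    unfolding perfect_matchings_def
  proof (intro CollectI conjI ballI allI impI)
    fix e assume "e \<in> y"
    then obtain k where k: "k < h" "e = {xs ! k, xs ! (k + h)}" by (auto simp: y_def)
    show "e \<subseteq> {0..<m}" using k xlt m2 by auto
    show "card e = 2" using k ne by simp
  next
    fix i assume "i < m"
    then obtain p where p: "p < m" "xs ! p = i" using setxs len by (metis atLeastLessThan_iff in_set_conv_nth zero_le)
    define k where "k = (if p < h then p else p - h)"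
    have k: "k < h" "p = k \<or> p = k + h" using p m2 by (auto simp: k_def)
    show "\<exists>!e. e \<in> y \<and> i \<in> e"
    proof (rule ex1I[of _ "{xs ! k, xs ! (k + h)}"])
      show "{xs ! k, xs ! (k + h)} \<in> y \<and> i \<in> {xs ! k, xs ! (k + h)}"
        using k p by (auto simp: y_def)
    next
      fix e assume e: "e \<in> y \<and> i \<in> e"
      then obtain k' where k': "k' < h" "e = {xs ! k', xs ! (k' + h)}" by (auto simp: y_def)
      have "p = k' \<or> p = k' + h"
        using e k' p nth_eq_iff_index_eq[OF dist] len m2 by auto
      then have "k' = k" using k k' by auto
      then show "e = {xs ! k, xs ! (k + h)}" using k' by simp
    qed
  qed
  then have "fst (sB y) \<in> y" using assms(3) by blast
  then obtain k where k: "k < h" "fst (sB y) = {xs ! k, xs ! (k + h)}" by (auto simp: y_def)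
  have edge: "{xs ! k, xs ! (k + h)} \<in> E" using k yPM by (auto simp: E_def edges_s_def)
  have kh: "k + h < m" using k m2 by simp
  have "xs ! (k + h) \<in> component m E (xs ! k)"
    using edge xlt[OF kh] by (auto simp: component_def)
  then have "component m E (xs ! (k + h)) = component m E (xs ! k)" by (rule comp_eq)
  then have ceq: "c (xs ! (k + h)) = c (xs ! k)" by (simp add: c_def)
  have sub: "(!) xs ` {k..k+h} \<subseteq> component m E (xs ! k)"
  proof
    fix w assume "w \<in> (!) xs ` {k..k+h}"
    then obtain t where t: "k \<le> t" "t \<le> k + h" "w = xs ! t" by auto
    have "c (xs ! t) = c (xs ! k)"
      using cmono[of k t] cmono[of t "k+h"] t kh ceq by simp
    then show "w \<in> component m E (xs ! k)"
      using comp_min[of "xs ! k" m "xs ! t" E] t xlt kh by (simp add: c_def)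
  qed
  have inj: "inj_on ((!) xs) {k..k+h}"
    using nth_eq_iff_index_eq[OF dist] len kh by (auto simp: inj_on_def)
  have "h + 1 = card ((!) xs ` {k..k+h})" using card_image[OF inj] by simp
  also have "\<dots> \<le> card (component m E (xs ! k))" using sub comp_fin by (intro card_mono) auto
  finally have "real (card (component m E (xs ! k))) > real m / 2" using m2 by simp
  then show ?thesis using xlt[of k] k m2 unfolding E_def by auto
qed

theorem lemma2:
  fixes m :: nat
    and sA :: "bool list \<Rightarrow> bool list"
    and sB :: "nat set set \<Rightarrow> nat set \<times> bool list"
  assumes "m > 0" and "even m"
    and "winning_strategy m sA sB"
  shows "\<exists>R :: bool list set. (\<forall>r\<in>R. length r = m) \<and>
           real (card R) \<ge> 2 ^ m / 2 ^ Lm m \<and>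
           (\<exists>v<m. real (card (component m (edges_s m sB) v)) > real m / 2) \<and>
           (\<forall>i j. {i, j} \<in> edges_s m sB \<longrightarrow>
              (\<forall>r\<in>R. \<forall>r'\<in>R. (r ! i \<noteq> r ! j) = (r' ! i \<noteq> r' ! j)))"
proof -
  have W: "\<forall>x y. length x = m \<longrightarrow> y \<in> perfect_matchings m \<longrightarrow>
        wins m x (sA x) y (fst (sB y)) (snd (sB y))"
    and LA: "\<forall>x. length x = m \<longrightarrow> length (sA x) = Lm m"
    using assms(3) by (auto simp: winning_strategy_def)
  have inY: "\<forall>y\<in>perfect_matchings m. fst (sB y) \<in> y"
  proof
    fix y assume "y \<in> perfect_matchings m"
    then have "wins m (replicate m False) (sA (replicate m False)) y (fst (sB y)) (snd (sB y))"
      using W by simp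
    then show "fst (sB y) \<in> y" unfolding wins_def by blast
  qed
  obtain a where a: "real (card {x. length x = m \<and> sA x = a}) \<ge> 2^m/2^Lm m"
    using pigeon[OF LA] by blast
  define R where "R = {x. length x = m \<and> sA x = a}"
  have val: "(r ! i \<noteq> r ! j) = dotv (xorv (bin (Lm m) i) (bin (Lm m) j)) (xorv a (snd (sB y)))"
    if RR: "r \<in> R" "y \<in> perfect_matchings m" "fst (sB y) = {i, j}" for r i j y
  proof -
    have "length r = m" "sA r = a" using RR(1) by (auto simp: R_def)
    then have "wins m r a y (fst (sB y)) (snd (sB y))"
      using W RR(2) by blast
    then have "\<exists>b1 b2. fst (sB y) = {b1, b2} \<and> b1 \<noteq> b2 \<and>
      (r ! b1 \<noteq> r ! b2) = dotv (xorv (bin (Lm m) b1) (bin (Lm m) b2)) (xorv a (snd (sB y)))"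
      unfolding wins_def by blast
    then obtain b1 b2 where b: "fst (sB y) = {b1, b2}" "b1 \<noteq> b2"
      "(r ! b1 \<noteq> r ! b2) = dotv (xorv (bin (Lm m) b1) (bin (Lm m) b2)) (xorv a (snd (sB y)))"
      by blast
    from b(1) RR(3) have "(b1 = i \<and> b2 = j) \<or> (b1 = j \<and> b2 = i)" by (auto simp: doubleton_eq_iff)
    then show ?thesis
    proof
      assume "b1 = i \<and> b2 = j" then show ?thesis using b(3) by simp
    next
      assume "b1 = j \<and> b2 = i" then show ?thesis
        using b(3) xorv_comm[of "bin (Lm m) j" "bin (Lm m) i"] by auto
    qed
  qed
  show ?thesis
  proof (intro exI[of _ R] conjI allI impI ballI)
    show "\<And>r. r \<in> R \<Longrightarrow> length r = m" by (simp add: R_def)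
    show "real (card R) \<ge> 2 ^ m / 2 ^ Lm m" using a by (simp add: R_def)
    show "\<exists>v<m. real (card (component m (edges_s m sB) v)) > real m / 2"
      using big_component[OF assms(1,2) inY] .
  next
    fix i j r r' assume "{i, j} \<in> edges_s m sB" "r \<in> R" "r' \<in> R"
    then show "(r ! i \<noteq> r ! j) = (r' ! i \<noteq> r' ! j)"
    proof -
      from \<open>{i, j} \<in> edges_s m sB\<close> obtain y where "y \<in> perfect_matchings m" "fst (sB y) = {i, j}"
        unfolding edges_s_def by auto
      then show ?thesis using val[OF \<open>r \<in> R\<close>] val[OF \<open>r' \<in> R\<close>] by simp
    qed
  qed
qed

end
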